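(* Let $q$ be a prime power and let $L\subseteq[q-1]$ with $|L|=s\ge1$. If $\mathcal{F}\subseteq 2^{[n]}$ is $q$-modular $L$-differencing Sperner, then $$|\mathcal{F}|\le\sum_{i=0}^{2^{s-1}}\binom{n}{i}.$$
   Context: $[n]=\{1,\ldots,n\}$, $2^{[n]}$ is the family of all subsets of $[n]$. For $L\subseteq[q-1]$, $\mathcal{F}$ is $q$-modular $L$-differencing Sperner if for all distinct $A,B\in\mathcal{F}$, $|A\setminus B|\equiv\ell\pmod q$ for some $\ell\in L$. *)

theory Defs
  imports "HOL-Computational_Algebra.Primes"
begin

definition prime_power :: "nat \<Rightarrow> bool" where
  "prime_power q \<longleftrightarrow> (\<exists>p k. prime p \<and> k \<ge> 1 \<and> q = p ^ k)"

definition modular_L_differencing_Sperner :: "nat \<Rightarrow> nat set \<Rightarrow> nat set set \<Rightarrow> bool" where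
  "modular_L_differencing_Sperner q L F \<longleftrightarrow>
     (\<forall>A\<in>F. \<forall>B\<in>F. A \<noteq> B \<longrightarrow> (\<exists>l\<in>L. card (A - B) mod q = l mod q))"

end

theory Submission
  imports Defs Complex_Main "HOL-Library.Function_Algebras"
begin


lemma mult_uminus: "multiplicity (p::int) (- x) = multiplicity p x"
  by (metis multiplicity_normalize_right normalize_int_def abs_minus_cancel)

lemma mult_prod_list:
  assumes "prime (p::int)" "0 \<notin> set cs"
  shows "multiplicity p (prod_list (map uminus cs)) = sum_list (map (multiplicity p) cs)"
  using assms(2)
proof (induction cs)
  case Nil then show ?case by simp
next
  case (Cons c cs)
  have "prod_list (map uminus cs) \<noteq> 0" using Cons.prems by (auto simp: prod_list_zero_iff)
  moreover have "multiplicity p (- c * prod_list (map uminus cs)) = multiplicity p (- c) + multiplicity p (prod_list (map uminus cs))"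
    using Cons.prems assms(1) \<open>prod_list (map uminus cs) \<noteq> 0\<close>
    by (intro prime_elem_multiplicity_mult_distrib) (auto intro: prime_imp_prime_elem)
  ultimately show ?case using Cons by (simp add: mult_uminus)
qed

lemma dvd_prod_list_pow:
  assumes "\<And>c. c \<in> set cs \<Longrightarrow> (a::int) dvd f c"
  shows "a ^ length cs dvd prod_list (map f cs)"
  using assms by (induction cs) (auto intro: mult_dvd_mono)

lemma sum_list_le:
  assumes "\<And>c. c \<in> set cs \<Longrightarrow> (f c::nat) \<le> b"
  shows "sum_list (map f cs) \<le> length cs * b"
  using assms by (induction cs) (auto simp: add_mono)

lemma mod_dvd_int:
  assumes "y mod q = (l::nat)"
  shows "int q dvd int y - int l"
proof -
  have "int y mod int q = int l mod int q"
    using assms by (metis mod_mod_trivial of_nat_mod)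
  then show ?thesis by (simp add: mod_eq_dvd_iff)
qed

lemma mult_lt_k:
  assumes "prime p" "l \<in> {1..<p^k}"
  shows "multiplicity (int p) (int l) < k"
proof (rule multiplicity_lessI)
  show "\<not> int p ^ k dvd int l"
  proof
    assume "int p ^ k dvd int l"
    then have "p ^ k dvd l" by (metis of_nat_dvd_iff of_nat_power)
    with assms(2) show False by (auto dest: dvd_imp_le)
  qed
  show "int l \<noteq> 0" using assms(2) by auto
  show "\<not> is_unit (int p)" using assms(1) by (simp add: prime_nat_iff)
qed

lemma pv_dvd:
  "int p ^ multiplicity (int p) (int l) dvd int l"
  by (rule multiplicity_dvd)

lemma key:
  fixes p k :: nat
  assumes p: "prime p" and k: "k \<ge> 1"
  shows "card L = Suc n \<Longrightarrow> L \<subseteq> {1..<p^k} \<Longrightarrow> \<exists>cs. length cs = 2^n \<and> set cs \<subseteq> int ` L \<and>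
     (\<forall>y::nat. y mod p^k \<in> L \<longrightarrow>
        int p ^ (sum_list (map (multiplicity (int p)) cs) + 1) dvd prod_list (map (\<lambda>c. int y - c) cs))"
proof (induction n arbitrary: L)
  case 0
  then obtain l where L: "L = {l}" by (auto simp: card_Suc_eq)
  have lt: "multiplicity (int p) (int l) < k" using mult_lt_k[OF p] 0 L by auto
  show ?case
  proof (intro exI[of _ "[int l]"] conjI allI impI)
    fix y :: nat assume "y mod p^k \<in> L"
    then have "y mod p^k = l" using L by auto
    then have "int (p^k) dvd int y - int l" by (rule mod_dvd_int)
    moreover have "int p ^ (multiplicity (int p) (int l) + 1) dvd int (p^k)"
      using lt by (metis Suc_eq_plus1 Suc_leI le_imp_power_dvd of_nat_power)
    ultimately show "int p ^ (sum_list (map (multiplicity (int p)) [int l]) + 1) dvd prod_list (map (\<lambda>c. int y - c) [int l])"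
      by (auto intro: dvd_trans)
  qed (use L in auto)
next
  case (Suc n)
  define f where "f = (\<lambda>l. multiplicity (int p) (int l))"
  have fin: "finite L" and ne: "L \<noteq> {}" using Suc.prems by (auto intro: card_ge_0_finite)
  define v0 where "v0 = Min (f ` L)"
  have "v0 \<in> f ` L" using Min_in[of "f ` L"] fin ne unfolding v0_def by auto
  then obtain l0 where l0: "l0 \<in> L" "f l0 = v0" by auto
  have minv: "\<And>l. l \<in> L \<Longrightarrow> v0 \<le> f l" unfolding v0_def using fin by auto
  define L' where "L' = L - {l0}"
  have cL': "card L' = Suc n" using Suc.prems l0 fin unfolding L'_def by auto
  have sL': "L' \<subseteq> {1..<p^k}" using Suc.prems unfolding L'_def by auto
  obtain cs' where cs': "length cs' = 2^n" "set cs' \<subseteq> int ` L'"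
    "\<And>y::nat. y mod p^k \<in> L' \<Longrightarrow> int p ^ (sum_list (map (multiplicity (int p)) cs') + 1) dvd prod_list (map (\<lambda>c. int y - c) cs')"
    using Suc.IH[OF cL' sL'] by blast
  define m where "m = (2::nat)^n"
  define S' where "S' = sum_list (map (multiplicity (int p)) cs')"
  have m1: "m \<ge> 1" unfolding m_def by simp
  have v0k: "v0 < k" using mult_lt_k[OF p] l0 Suc.prems unfolding f_def by auto
  have "S' \<le> length cs' * (k - 1)"
    unfolding S'_def
  proof (rule sum_list_le)
    fix c assume "c \<in> set cs'"
    then obtain l where "l \<in> L'" "c = int l" using cs'(2) by auto
    then show "multiplicity (int p) c \<le> k - 1" using mult_lt_k[OF p, of l k] sL' by auto
  qed
  then have S'le: "S' \<le> m * (k - 1)" using cs'(1) m_def by simp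
  have pv0q: "int p ^ v0 dvd int (p ^ k)" using v0k by (simp add: le_imp_power_dvd)
  have pv0l: "int p ^ v0 dvd int l" if "l \<in> L" for l
    using minv[OF that] pv_dvd[of p l] unfolding f_def by (meson dvd_trans le_imp_power_dvd)
  have pv0y: "int p ^ v0 dvd int y" if "y mod p^k \<in> L" for y
  proof -
    have e: "y = p^k * (y div p^k) + y mod p^k" by simp
    have "int y = int (p^k * (y div p^k) + y mod p^k)" using e by (rule arg_cong)
    also have "\<dots> = int (p^k) * int (y div p^k) + int (y mod p^k)"
      by (simp only: of_nat_add of_nat_mult)
    finally have "int y = int (p^k) * int (y div p^k) + int (y mod p^k)" .
    moreover have "int p ^ v0 dvd int (p^k) * int (y div p^k) + int (y mod p^k)"
      by (rule dvd_add[OF dvd_mult2[OF pv0q] pv0l[OF that]])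
    ultimately show ?thesis by simp
  qed
  show ?case
  proof (intro exI[of _ "cs' @ replicate m (int l0)"] conjI allI impI)
    show "length (cs' @ replicate m (int l0)) = 2 ^ Suc n" using cs'(1) m_def by simp
    show "set (cs' @ replicate m (int l0)) \<subseteq> int ` L" using cs'(2) l0 unfolding L'_def by auto
    fix y :: nat assume y: "y mod p^k \<in> L"
    have Seq: "sum_list (map (multiplicity (int p)) (cs' @ replicate m (int l0))) = S' + m * v0"
      using l0 unfolding S'_def f_def by (simp add: sum_list_replicate)
    have Peq: "prod_list (map (\<lambda>c. int y - c) (cs' @ replicate m (int l0)))
       = prod_list (map (\<lambda>c. int y - c) cs') * (int y - int l0) ^ m"
      by (simp add: prod_list_replicate)
    show "int p ^ (sum_list (map (multiplicity (int p)) (cs' @ replicate m (int l0))) + 1) dvd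
          prod_list (map (\<lambda>c. int y - c) (cs' @ replicate m (int l0)))"
    proof (cases "y mod p^k = l0")
      case True
      have A0: "(int p ^ v0) ^ length cs' dvd prod_list (map (\<lambda>c. int y - c) cs')"
      proof (rule dvd_prod_list_pow)
        fix c assume "c \<in> set cs'"
        then obtain l where "l \<in> L" "c = int l" using cs'(2) unfolding L'_def by auto
        then show "int p ^ v0 dvd int y - c" using pv0l pv0y[OF y] by auto
      qed
      then have A: "(int p ^ v0) ^ m dvd prod_list (map (\<lambda>c. int y - c) cs')"
        using cs'(1) m_def by simp
      have B: "(int p ^ k) ^ m dvd (int y - int l0) ^ m"
        using mod_dvd_int[OF True] by (simp add: dvd_power_same)
      have e1: "int p ^ (v0 * m + k * m) = (int p ^ v0) ^ m * (int p ^ k) ^ m"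
        by (simp add: power_add power_mult)
      have "int p ^ (v0 * m + k * m) dvd prod_list (map (\<lambda>c. int y - c) cs') * (int y - int l0) ^ m"
        unfolding e1 using mult_dvd_mono[OF A B] .
      moreover have "S' + m * v0 + 1 \<le> v0 * m + k * m"
      proof -
        have "m * (k - 1) + 1 \<le> k * m" using m1 k by (cases k) (auto simp: algebra_simps)
        then show ?thesis using S'le by (simp add: algebra_simps)
      qed
      ultimately show ?thesis unfolding Seq Peq by (meson dvd_trans le_imp_power_dvd)
    next
      case False
      then have yL': "y mod p^k \<in> L'" using y unfolding L'_def by auto
      have A: "int p ^ (S' + 1) dvd prod_list (map (\<lambda>c. int y - c) cs')"
        using cs'(3)[OF yL'] unfolding S'_def .
      have B: "(int p ^ v0) ^ m dvd (int y - int l0) ^ m"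
        using pv0y[OF y] pv0l[OF l0(1)] by (simp add: dvd_power_same)
      have e2: "int p ^ (S' + m * v0 + 1) = int p ^ (S' + 1) * (int p ^ v0) ^ m"
        by (simp add: power_add power_mult[symmetric] mult.commute mult.left_commute)
      show ?thesis unfolding Seq Peq e2
        using mult_dvd_mono[OF A B] .
    qed
  qed
qed



definition sc :: "rat \<Rightarrow> (nat set \<Rightarrow> rat) \<Rightarrow> (nat set \<Rightarrow> rat)" where
  "sc c f = (\<lambda>X. c * f X)"

interpretation fs: vector_space sc
  by unfold_locales (auto simp: sc_def fun_eq_iff algebra_simps plus_fun_def)

definition ee :: "nat set \<Rightarrow> nat set \<Rightarrow> rat" where
  "ee S = (\<lambda>X. if S \<inter> X = {} then 1 else 0)"

definition PP :: "nat \<Rightarrow> nat \<Rightarrow> (nat set \<Rightarrow> rat) set" where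
  "PP n j = fs.span (ee ` {S. S \<subseteq> {1..n} \<and> card S \<le> j})"

lemma PP_mono: "j \<le> j' \<Longrightarrow> PP n j \<subseteq> PP n j'"
  unfolding PP_def by (rule fs.span_mono) auto

lemma ind_mul:
  assumes i: "i \<in> {1..n}" and g: "g \<in> PP n j"
  shows "(\<lambda>X. (if i \<notin> X then 1 else 0) * g X) \<in> PP n (Suc j)"
  using g unfolding PP_def
proof (induction rule: fs.span_induct_alt)
  case base
  have "(\<lambda>X. (if i \<notin> X then 1 else 0) * (0::nat set \<Rightarrow> rat) X) = 0"
    by (simp add: fun_eq_iff zero_fun_def)
  then show ?case using fs.span_zero by simp
next
  case (step c x y)
  then obtain S where S: "x = ee S" "S \<subseteq> {1..n}" "card S \<le> j" by auto
  have fin: "finite S" using S(2) finite_subset by blast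
  have eq: "(\<lambda>X. (if i \<notin> X then 1 else 0) * (sc c x + y) X)
      = sc c (ee (insert i S)) + (\<lambda>X. (if i \<notin> X then 1 else 0) * y X)"
    unfolding S(1) by (auto simp: fun_eq_iff sc_def ee_def plus_fun_def algebra_simps)
  have "ee (insert i S) \<in> ee ` {S. S \<subseteq> {1..n} \<and> card S \<le> Suc j}"
    using S i fin card_insert_le[of S i] by (auto intro!: imageI simp: card_insert_if)
  then show ?case unfolding eq
    by (intro fs.span_add fs.span_scale fs.span_base step.IH)
qed

lemma sum_fun_apply: "(sum F A) X = sum (\<lambda>i. F i X) (A::'b set)"
  by (induction A rule: infinite_finite_induct) (auto simp: plus_fun_def zero_fun_def)

lemma card_diff_sum:
  assumes "finite A"
  shows "(of_nat (card (A - X)) :: rat) = (\<Sum>i\<in>A. if i \<notin> X then 1 else 0)"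
proof -
  have "(\<Sum>i\<in>A. (if i \<notin> X then 1 else 0::rat)) = (\<Sum>i\<in>A - X. 1)"
    using assms by (simp add: sum.If_cases Diff_eq Compl_eq)
  then show ?thesis by simp
qed

lemma lin_mul:
  assumes A: "A \<subseteq> {1..n}" and g: "g \<in> PP n j"
  shows "(\<lambda>X. (of_nat (card (A - X)) - c) * g X) \<in> PP n (Suc j)"
proof -
  have fin: "finite A" using A finite_subset by blast
  have eq: "(\<lambda>X. (of_nat (card (A - X)) - c) * g X)
     = (\<Sum>i\<in>A. (\<lambda>X. (if i \<notin> X then 1 else 0) * g X)) + sc (- c) g"
    by (auto simp: fun_eq_iff sum_fun_apply sc_def plus_fun_def card_diff_sum[OF fin] sum_distrib_left algebra_simps)
  have "g \<in> PP n (Suc j)" using PP_mono[of j "Suc j" n] g by auto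
  moreover have "(\<Sum>i\<in>A. (\<lambda>X. (if i \<notin> X then 1 else 0) * g X)) \<in> PP n (Suc j)"
    unfolding PP_def
    by (rule fs.span_sum) (use ind_mul[OF _ g] A in \<open>auto simp: PP_def\<close>)
  ultimately show ?thesis unfolding eq PP_def by (intro fs.span_add fs.span_scale) auto
qed

lemma prod_in_PP:
  assumes A: "A \<subseteq> {1..n}"
  shows "(\<lambda>X. (of_int (prod_list (map (\<lambda>c. int (card (A - X)) - c) cs)) :: rat)) \<in> PP n (length cs)"
proof (induction cs)
  case Nil
  have "(\<lambda>X. (of_int (prod_list (map (\<lambda>c. int (card (A - X)) - c) [])) :: rat)) = ee {}"
    by (simp add: ee_def fun_eq_iff)
  moreover have "ee {} \<in> PP n 0" unfolding PP_def by (rule fs.span_base) auto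
  ultimately show ?case by simp
next
  case (Cons c cs)
  have "(\<lambda>X. (of_int (prod_list (map (\<lambda>c. int (card (A - X)) - c) (c # cs))) :: rat))
      = (\<lambda>X. (of_nat (card (A - X)) - of_int c) * (of_int (prod_list (map (\<lambda>c. int (card (A - X)) - c) cs)) :: rat))"
    by (simp add: fun_eq_iff)
  then show ?case using lin_mul[OF A Cons.IH, of "of_int c"] by simp
qed

lemma card_small_sets:
  "card {S. S \<subseteq> {1..n} \<and> card S \<le> d} = (\<Sum>i=0..d. n choose i)"
proof -
  have eq: "{S. S \<subseteq> {1..n} \<and> card S \<le> d} = (\<Union>i\<in>{0..d}. {S. S \<subseteq> {1..n} \<and> card S = i})"
    by auto
  have "card (\<Union>i\<in>{0..d}. {S. S \<subseteq> {1..n} \<and> card S = i}) = (\<Sum>i=0..d. card {S. S \<subseteq> {1..n} \<and> card S = i})"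
    by (rule card_UN_disjoint) auto
  also have "\<dots> = (\<Sum>i=0..d. n choose i)"
    by (rule sum.cong) (auto simp: n_subsets)
  finally show ?thesis using eq by simp
qed



lemma int_descent:
  fixes M :: "nat set \<Rightarrow> nat set \<Rightarrow> int" and p :: int
  assumes fin: "finite F" and p: "prime p"
    and off: "\<And>A B. A \<in> F \<Longrightarrow> B \<in> F \<Longrightarrow> A \<noteq> B \<Longrightarrow> p^(E+1) dvd M A B"
    and dg1: "\<And>A. A \<in> F \<Longrightarrow> p^E dvd M A A"
    and dg2: "\<And>A. A \<in> F \<Longrightarrow> \<not> p^(E+1) dvd M A A"
  shows "(\<forall>B\<in>F. (\<Sum>A\<in>F. b A * M A B) = 0) \<Longrightarrow> \<forall>A\<in>F. b A = 0"
proof (induction "\<Sum>A\<in>F. nat \<bar>b A\<bar>" arbitrary: b rule: less_induct)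
  case less
  have p0: "p \<noteq> 0" using p by auto
  have pdvd: "p dvd b B" if B: "B \<in> F" for B
  proof -
    have sum0: "(\<Sum>A\<in>F. b A * M A B) = 0" using less.prems B by auto
    have "(\<Sum>A\<in>F. b A * M A B) = b B * M B B + (\<Sum>A\<in>F - {B}. b A * M A B)"
      using B fin by (simp add: sum.remove)
    moreover have "p^(E+1) dvd (\<Sum>A\<in>F - {B}. b A * M A B)"
      by (rule dvd_sum) (use off B in auto)
    ultimately have "p^(E+1) dvd b B * M B B" using sum0
      by (metis add.commute add_diff_cancel_left' diff_0 dvd_minus_iff)
    obtain u where u: "M B B = p^E * u" using dg1[OF B] by (auto elim: dvdE)
    have nu: "\<not> p dvd u"
    proof
      assume "p dvd u"
      then have "p^E * p dvd M B B" using u by auto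
      with dg2[OF B] show False by (simp add: mult.commute)
    qed
    have "p^E * p dvd p^E * (b B * u)" using \<open>p^(E+1) dvd b B * M B B\<close> u
      by (simp add: mult.commute mult.left_commute)
    then have "p dvd b B * u" using p0 by simp
    then show ?thesis using nu p by (simp add: prime_dvd_mult_iff)
  qed
  show ?case
  proof (rule ccontr)
    assume "\<not> (\<forall>A\<in>F. b A = 0)"
    then obtain A0 where A0: "A0 \<in> F" "b A0 \<noteq> 0" by auto
    define b2 where "b2 = (\<lambda>A. b A div p)"
    have bb: "b A = p * b2 A" if "A \<in> F" for A
      using pdvd[OF that] unfolding b2_def by simp
    have s2: "\<forall>B\<in>F. (\<Sum>A\<in>F. b2 A * M A B) = 0"
    proof
      fix B assume B: "B \<in> F"
      have "p * (\<Sum>A\<in>F. b2 A * M A B) = (\<Sum>A\<in>F. b A * M A B)"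
        by (simp add: sum_distrib_left bb mult.assoc)
      also have "\<dots> = 0" using less.prems B by auto
      finally show "(\<Sum>A\<in>F. b2 A * M A B) = 0" using p0 by simp
    qed
    have p2: "p \<ge> 2" using prime_gt_1_int[OF p] by simp
    have "(\<Sum>A\<in>F. nat \<bar>b2 A\<bar>) < (\<Sum>A\<in>F. nat \<bar>b A\<bar>)"
    proof (rule sum_strict_mono_ex1[OF fin])
      show "\<forall>x\<in>F. nat \<bar>b2 x\<bar> \<le> nat \<bar>b x\<bar>"
      proof
        fix x assume x: "x \<in> F"
        have "\<bar>b2 x\<bar> \<le> p * \<bar>b2 x\<bar>" using p2 by (simp add: mult_le_cancel_right1)
        then show "nat \<bar>b2 x\<bar> \<le> nat \<bar>b x\<bar>" using bb[OF x] p2 by (simp add: abs_mult)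
      qed
      have nz: "b2 A0 \<noteq> 0" using A0 bb by auto
      have "\<bar>b2 A0\<bar> < p * \<bar>b2 A0\<bar>" using p2 nz by (simp add: mult_less_cancel_right1)
      then show "\<exists>a\<in>F. nat \<bar>b2 a\<bar> < nat \<bar>b a\<bar>" using bb[OF A0(1)] p2 A0 by (intro bexI[of _ A0]) (auto simp: abs_mult)
    qed
    then have "\<forall>A\<in>F. b2 A = 0" using less.hyps s2 by blast
    then show False using A0 bb by auto
  qed
qed


lemma common_denom:
  fixes a :: "nat set \<Rightarrow> rat"
  shows "finite F \<Longrightarrow> \<exists>N::int. N > 0 \<and> (\<forall>A\<in>F. \<exists>z::int. of_int z = of_int N * a A)"
proof (induction F rule: finite_induct)
  case empty
  show ?case by (intro exI[of _ 1]) auto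
next
  case (insert x F)
  then obtain N where N: "N > 0" "\<forall>A\<in>F. \<exists>z::int. of_int z = of_int N * a A" by blast
  obtain n d where nd: "quotient_of (a x) = (n, d)" by (cases "quotient_of (a x)") auto
  have d: "d > 0" using quotient_of_denom_pos[OF nd] .
  have ax: "a x = of_int n / of_int d" using quotient_of_div[OF nd] .
  have "\<forall>A\<in>insert x F. \<exists>z::int. of_int z = of_int (N * d) * a A"
  proof
    fix A assume A: "A \<in> insert x F"
    show "\<exists>z::int. of_int z = of_int (N * d) * a A"
    proof (cases "A = x")
      case True
      then show ?thesis using d ax by (intro exI[of _ "N * n"]) (simp add: field_simps)
    next
      case False
      then have "A \<in> F" using A by auto
      then obtain z where "of_int z = of_int N * a A" using N by blast
      then show ?thesis by (intro exI[of _ "d * z"]) (simp add: algebra_simps)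
    qed
  qed
  moreover have "N * d > 0" using N d by simp
  ultimately show ?case by blast
qed

lemma indep_core:
  fixes h :: "nat set \<Rightarrow> nat set \<Rightarrow> int" and p :: int
  assumes fin: "finite F" and p: "prime p"
    and off: "\<And>A B. A \<in> F \<Longrightarrow> B \<in> F \<Longrightarrow> A \<noteq> B \<Longrightarrow> p^(E+1) dvd h A B"
    and dg1: "\<And>A. A \<in> F \<Longrightarrow> p^E dvd h A A"
    and dg2: "\<And>A. A \<in> F \<Longrightarrow> \<not> p^(E+1) dvd h A A"
    and S: "\<And>B. B \<in> F \<Longrightarrow> (\<Sum>A\<in>F. a A * of_int (h A B)) = (0::rat)"
  shows "\<forall>A\<in>F. a A = 0"
proof -
  obtain N where N: "N > 0" "\<forall>A\<in>F. \<exists>z::int. of_int z = of_int N * a A"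
    using common_denom[OF fin] by blast
  then obtain b where b: "\<forall>A\<in>F. of_int (b A) = of_int N * a A" by metis
  have "\<forall>B\<in>F. (\<Sum>A\<in>F. b A * h A B) = 0"
  proof
    fix B assume B: "B \<in> F"
    have "(of_int (\<Sum>A\<in>F. b A * h A B) :: rat) = (\<Sum>A\<in>F. of_int (b A) * of_int (h A B))"
      by simp
    also have "\<dots> = (\<Sum>A\<in>F. of_int N * (a A * of_int (h A B)))"
      by (rule sum.cong) (use b in auto)
    also have "\<dots> = of_int N * (\<Sum>A\<in>F. a A * of_int (h A B))"
      by (simp add: sum_distrib_left)
    also have "\<dots> = 0" using S[OF B] by simp
    finally show "(\<Sum>A\<in>F. b A * h A B) = 0" by (simp only: of_int_eq_0_iff)
  qed
  then have "\<forall>A\<in>F. b A = 0" using int_descent[where M=h and b=b, OF fin p off dg1 dg2] by blast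
  then show ?thesis using b N by auto
qed



theorem mainTheorem8:
  fixes q n s :: nat and L :: "nat set" and F :: "nat set set"
  assumes "prime_power q"
    and "L \<subseteq> {1..q-1}"
    and "card L = s" and "s \<ge> 1"
    and "F \<subseteq> Pow {1..n}"
    and "modular_L_differencing_Sperner q L F"
  shows "card F \<le> (\<Sum>i=0..2^(s-1). n choose i)"
proof -
  obtain p k where p: "prime p" and k: "k \<ge> 1" and q: "q = p ^ k"
    using assms(1) unfolding prime_power_def by blast
  have "p > 0" using p by (simp add: prime_gt_0_nat)
  then have q1: "q \<ge> 1" using q by (simp add: Suc_leI)
  have Lq: "L \<subseteq> {1..<p^k}"
  proof
    fix x assume "x \<in> L"
    then have "x \<in> {1..q-1}" using assms(2) by blast
    then show "x \<in> {1..<p^k}" using q q1 by auto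
  qed
  have cL: "card L = Suc (s - 1)" using assms(3,4) by simp
  obtain cs where cs: "length cs = 2^(s-1)" "set cs \<subseteq> int ` L"
    "\<And>y::nat. y mod p^k \<in> L \<Longrightarrow>
        int p ^ (sum_list (map (multiplicity (int p)) cs) + 1) dvd prod_list (map (\<lambda>c. int y - c) cs)"
    using key[OF p k cL Lq] by blast
  define E where "E = sum_list (map (multiplicity (int p)) cs)"
  define h where "h = (\<lambda>(A::nat set) X. prod_list (map (\<lambda>c. int (card (A - X)) - c) cs))"
  define G where "G = (\<lambda>A X. (of_int (h A X) :: rat))"
  have pp: "prime (int p)" using p by simp
  have finF: "finite F" using assms(5) by (rule finite_subset) simp
  have nz: "0 \<notin> set cs"
  proof
    assume "0 \<in> set cs"
    then obtain l where "l \<in> L" "int l = 0" using cs(2) by auto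
    then show False using Lq by force
  qed
  have eq0: "((-) (0::int)) = uminus" by (simp add: fun_eq_iff)
  have hAA: "h A A = prod_list (map uminus cs)" for A
    unfolding h_def by (simp add: eq0)
  have hne: "h A A \<noteq> 0" for A
    unfolding hAA using nz by (auto simp: prod_list_zero_iff)
  have mult: "multiplicity (int p) (h A A) = E" for A
    unfolding hAA E_def using mult_prod_list[OF pp nz] .
  have dg1: "int p ^ E dvd h A A" for A
    using multiplicity_dvd[of "int p" "h A A"] mult[of A] by simp
  have nunit: "\<not> is_unit (int p)" using pp not_prime_unit by blast
  have dg2: "\<not> int p ^ (E + 1) dvd h A A" for A
  proof
    assume a: "int p ^ (E + 1) dvd h A A"
    have "E + 1 \<le> multiplicity (int p) (h A A)"
      by (intro multiplicity_geI) (use hne nunit a in auto)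
    then show False using mult[of A] by simp
  qed
  have off: "int p ^ (E + 1) dvd h A B" if AB: "A \<in> F" "B \<in> F" "A \<noteq> B" for A B
  proof -
    have X: "\<forall>A\<in>F. \<forall>B\<in>F. A \<noteq> B \<longrightarrow> (\<exists>l\<in>L. card (A - B) mod q = l mod q)"
      using assms(6) unfolding modular_L_differencing_Sperner_def .
    obtain l where l: "l \<in> L" "card (A - B) mod q = l mod q"
      using X[rule_format, OF AB] by (elim bexE)
    have lq: "l < q" using l(1) Lq q by auto
    have "card (A - B) mod p^k = l" using l(2) lq q by simp
    then have m: "card (A - B) mod p^k \<in> L" using l(1) by simp
    have "int p ^ (E + 1) dvd prod_list (map (\<lambda>c. int (card (A - B)) - c) cs)"
      using cs(3)[OF m] unfolding E_def .
    then show ?thesis unfolding h_def by simp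
  qed
  have inj: "inj_on G F"
  proof
    fix A B assume AB: "A \<in> F" "B \<in> F" "G A = G B"
    show "A = B"
    proof (rule ccontr)
      assume "A \<noteq> B"
      have "G A B = G B B" using AB by simp
      then have "h A B = h B B" unfolding G_def by simp
      then show False using off[OF AB(1,2) \<open>A \<noteq> B\<close>] dg2[of B] by simp
    qed
  qed
  have full: "\<forall>v\<in>G ` F. c v = 0" if c: "(\<Sum>v\<in>G ` F. sc (c v) v) = 0" for c
  proof -
    have Z: "(\<Sum>A\<in>F. sc (c (G A)) (G A)) = 0"
      using c by (simp add: sum.reindex[OF inj])
    have S: "(\<Sum>A\<in>F. c (G A) * of_int (h A B)) = 0" for B
    proof -
      have "(\<Sum>A\<in>F. sc (c (G A)) (G A)) B = (0::nat set \<Rightarrow> rat) B" using Z by simp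
      then show ?thesis by (simp add: sum_fun_apply sc_def G_def zero_fun_def)
    qed
    have "\<forall>A\<in>F. c (G A) = 0"
      by (rule indep_core[where h=h and a="\<lambda>A. c (G A)", OF finF pp off dg1 dg2]) (use S in auto)
    then show ?thesis by auto
  qed
  have indep: "fs.independent (G ` F)"
  proof
    assume "fs.dependent (G ` F)"
    then obtain t u where t: "finite t" "t \<subseteq> G ` F" "(\<Sum>v\<in>t. sc (u v) v) = 0" "\<exists>v\<in>t. u v \<noteq> 0"
      unfolding fs.dependent_explicit by blast
    define c where "c = (\<lambda>v. if v \<in> t then u v else 0)"
    have "(\<Sum>v\<in>G ` F. sc (c v) v) = (\<Sum>v\<in>t. sc (c v) v)"
    proof (rule sum.mono_neutral_right)
      show "finite (G ` F)" using finF by simp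
      show "t \<subseteq> G ` F" by (rule t(2))
      show "\<forall>i\<in>G ` F - t. sc (c i) i = 0" by (auto simp: c_def sc_def zero_fun_def)
    qed
    also have "\<dots> = (\<Sum>v\<in>t. sc (u v) v)" by (rule sum.cong) (auto simp: c_def)
    finally have "\<forall>v\<in>G ` F. c v = 0" using full t(3) by simp
    moreover obtain v where v: "v \<in> t" "u v \<noteq> 0" using t(4) by blast
    ultimately have "c v = 0" using t(2) by blast
    then show False using v unfolding c_def by simp
  qed
  define T where "T = ee ` {S. S \<subseteq> {1..n} \<and> card S \<le> 2^(s-1)}"
  have finT: "finite T" unfolding T_def by (rule finite_imageI) (rule finite_subset[of _ "Pow {1..n}"], auto)
  have sub: "G ` F \<subseteq> fs.span T"
  proof
    fix v assume "v \<in> G ` F"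
    then obtain A where A: "A \<in> F" "v = G A" by auto
    have "A \<subseteq> {1..n}" using A assms(5) by auto
    from prod_in_PP[OF this, of cs] show "v \<in> fs.span T"
      unfolding A(2) G_def h_def T_def PP_def cs(1) .
  qed
  have "card (G ` F) \<le> card T" using fs.independent_span_bound[OF finT indep sub] by simp
  also have "\<dots> \<le> card {S. S \<subseteq> {1..n} \<and> card S \<le> 2^(s-1)}" unfolding T_def
    by (rule card_image_le) (rule finite_subset[of _ "Pow {1..n}"], auto)
  also have "\<dots> = (\<Sum>i=0..2^(s-1). n choose i)" by (rule card_small_sets)
  finally show ?thesis using card_image[OF inj] by simp
qed


end
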